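(* Let $p,q,r$ be integers with $1<p<q<r$, $p$ odd and $pq+pr-qr=1$. Then $p+1\le q\le 2p-1$. *)

theory Defs
  imports Main
begin

end

theory Submission
  imports Defs
begin

theorem lemma3p1:
  fixes p q r :: int
  assumes "1 < p" and "p < q" and "q < r" and "odd p"
    and "p * q + p * r - q * r = 1"
  shows "p + 1 \<le> q \<and> q \<le> 2 * p - 1"
proof -
  have e: "(q - p) * (r - p) = p * p - 1" using assms(5) by (simp add: algebra_simps)
  have "q - p < p"
  proof (rule ccontr)
    assume "\<not> q - p < p"
    hence a: "p \<le> q - p" by simp
    have "p \<le> r - p" using a assms(3) by simp
    hence "p * p \<le> (q - p) * (r - p)" using a assms(1) by (intro mult_mono) auto
    thus False using e by simp
  qed
  thus ?thesis using assms(2) by simp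
qed

end
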